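(* For every even integer $n\ge 2$, the number $A_0(n)$ of cyclically alternating permutations of $[n]$ satisfies $$A_0(n)=\left(\frac{2}{\pi}\right)^{n} n!\,S(n),\qquad\text{where } S(n)=\sum_{k=-\infty}^{\infty}\frac{1}{(4k+1)^n}.$$
   Context: $[n]=\{1,2,\ldots,n\}$. For $n$ even, a permutation $\sigma$ of $[n]$ is cyclically alternating if $\sigma(i)<\sigma(i+1)$ for odd $i$, $\sigma(i)>\sigma(i+1)$ for even $i$ ($1\le i\le n-1$), and $\sigma(n)>\sigma(1)$. *)

theory Defs
  imports "HOL-Analysis.Analysis" "HOL-Combinatorics.Permutations"
begin

definition cyclically_alternating :: "nat \<Rightarrow> (nat \<Rightarrow> nat) \<Rightarrow> bool" where
  "cyclically_alternating n \<sigma> \<longleftrightarrow>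
     (\<forall>i\<in>{1..n-1}. (odd i \<longrightarrow> \<sigma> i < \<sigma> (i+1)) \<and> (even i \<longrightarrow> \<sigma> i > \<sigma> (i+1)))
     \<and> \<sigma> n > \<sigma> 1"

definition A0 :: "nat \<Rightarrow> nat" where
  "A0 n = card {\<sigma>. \<sigma> permutes {1..n} \<and> cyclically_alternating n \<sigma>}"

end

theory Submission
  imports Defs "HOL-Complex_Analysis.Complex_Analysis"
begin


lemma aux_cancel:
  fixes p c X s :: complex
  assumes "p \<noteq> 0" "c \<noteq> 0" "(p / c) * X = p * (p * s) / c\<^sup>2"
  shows "X = p * (s / c)"
proof -
  have "p * (p * s) / c\<^sup>2 = (p / c) * (p * (s / c))"
    by (simp add: power2_eq_square)
  with assms(3) have "(p / c) * X = (p / c) * (p * (s / c))" by simp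
  moreover have "p / c \<noteq> 0" using assms(1,2) by simp
  ultimately show ?thesis by (metis mult_left_cancel)
qed

lemma digamma_tan:
  fixes w :: complex
  assumes w: "w \<in> ball 0 (1/2)"
  shows "Digamma (1/2 + w) - Digamma (1/2 - w) = of_real pi * tan (of_real pi * w)"
proof -
  have re: "Re (1/2 + v) > 0" "Re (1/2 - v) > 0" if "v \<in> ball 0 (1/2)" for v :: complex
    using that abs_Re_le_cmod[of v] by (auto simp: dist_norm)
  have np: "1/2 + v \<notin> \<int>\<^sub>\<le>\<^sub>0" "1/2 - v \<notin> \<int>\<^sub>\<le>\<^sub>0" if "v \<in> ball 0 (1/2)" for v :: complex
  proof -
    have "z \<notin> \<int>\<^sub>\<le>\<^sub>0" if "Re z > 0" for z :: complex
    proof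
      assume "z \<in> \<int>\<^sub>\<le>\<^sub>0"
      then obtain n where "z = of_int n" "n \<le> 0" by (auto elim!: nonpos_Ints_cases)
      with \<open>Re z > 0\<close> show False by simp
    qed
    then show "1/2 + v \<notin> \<int>\<^sub>\<le>\<^sub>0" "1/2 - v \<notin> \<int>\<^sub>\<le>\<^sub>0" using re[OF that] by auto
  qed
  have cosnz: "cos (of_real pi * v) \<noteq> 0" if "v \<in> ball 0 (1/2)" for v :: complex
  proof
    assume "cos (of_real pi * v) = 0"
    then obtain k :: int where "of_real pi * v = complex_of_real (of_int k * pi) + complex_of_real pi / 2"
      using cos_eq_0 by blast
    then have "of_real pi * v = of_real ((of_int k + 1/2) * pi)" by (simp add: algebra_simps)
    then have "of_real pi * v = of_real pi * complex_of_real (of_int k + 1/2)" by (simp add: algebra_simps)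
    then have "v = of_real (of_int k + 1/2)" by (subst (asm) mult_left_cancel) auto
    then have "norm v = \<bar>of_int k + 1/2\<bar>" by (simp only: norm_of_real)
    moreover have "\<bar>(of_int k::real) + 1/2\<bar> \<ge> 1/2"
      by (cases "k \<ge> 0") (auto simp: abs_if)
    ultimately show False using that by (simp add: dist_norm)
  qed
  have eq: "Gamma (1/2 + v) * Gamma (1/2 - v) = of_real pi / cos (of_real pi * v)" for v :: complex
  proof -
    have "Gamma (1/2 + v) * Gamma (1 - (1/2 + v)) = of_real pi / sin (of_real pi * (1/2 + v))"
      by (rule Gamma_reflection_complex)
    moreover have "sin (of_real pi * (1/2 + v)) = cos (of_real pi * v)"
      by (simp add: distrib_left sin_add)
    ultimately show ?thesis by (simp add: algebra_simps)
  qed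
  define G where "G = (\<lambda>v::complex. Gamma (1/2 + v) * Gamma (1/2 - v))"
  have d1: "(G has_field_derivative G w * (Digamma (1/2 + w) - Digamma (1/2 - w))) (at w)"
    unfolding G_def using np[OF w]
    by (auto intro!: derivative_eq_intros simp: algebra_simps)
  have d2: "((\<lambda>v. of_real pi / cos (of_real pi * v)) has_field_derivative
      of_real pi * (of_real pi * sin (of_real pi * w)) / (cos (of_real pi * w))\<^sup>2) (at w)"
    using cosnz[OF w]
    by (auto intro!: derivative_eq_intros simp: power2_eq_square field_simps)
  have d1': "((\<lambda>v. of_real pi / cos (of_real pi * v)) has_field_derivative G w * (Digamma (1/2 + w) - Digamma (1/2 - w))) (at w)"
    using d1 
    by (rule has_field_derivative_transform_within_open[where S="ball 0 (1/2)"])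
       (use w in \<open>auto simp: G_def eq\<close>)
  have "G w * (Digamma (1/2 + w) - Digamma (1/2 - w)) =
      of_real pi * (of_real pi * sin (of_real pi * w)) / (cos (of_real pi * w))\<^sup>2"
    using DERIV_unique[OF d1' d2] .
  moreover have "G w = of_real pi / cos (of_real pi * w)" by (simp add: G_def eq)
  ultimately have "(of_real pi / cos (of_real pi * w)) * (Digamma (1/2 + w) - Digamma (1/2 - w)) =
      of_real pi * (of_real pi * sin (of_real pi * w)) / (cos (of_real pi * w))\<^sup>2" by simp
  from aux_cancel[OF _ cosnz[OF w] this] show ?thesis
    by (simp add: tan_def)
qed



lemma cos_nz_ball:
  fixes v :: complex
  assumes "norm v < pi/2"
  shows "cos v \<noteq> 0"
proof
  assume "cos v = 0"
  then obtain k :: int where "v = complex_of_real (of_int k * pi) + complex_of_real pi / 2"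
    using cos_eq_0 by blast
  then have "v = of_real ((of_int k + 1/2) * pi)" by (simp add: algebra_simps)
  then have "norm v = \<bar>of_int k + 1/2\<bar> * pi" by (simp only: norm_of_real abs_mult) simp
  moreover have "\<bar>(of_int k::real) + 1/2\<bar> \<ge> 1/2"
    by (cases "k \<ge> 0") (auto simp: abs_if)
  ultimately show False using assms pi_gt_zero
    using mult_right_mono[of "1/2" "\<bar>(of_int k::real) + 1/2\<bar>" pi] by linarith
qed

lemma tan_holo: "tan holomorphic_on ball 0 (pi/2)"
proof -
  have "(\<lambda>z. sin z / cos z) holomorphic_on ball 0 (pi/2)"
    by (intro holomorphic_intros) (auto intro!: cos_nz_ball)
  then show ?thesis by (simp add: tan_def[abs_def])
qed

lemma deriv_tan_eq:
  fixes w :: complex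
  assumes "norm w < pi/2"
  shows "deriv tan w = 1 + tan w * tan w"
proof -
  have c: "cos w \<noteq> 0" using cos_nz_ball[OF assms] .
  have "deriv tan w = inverse ((cos w)\<^sup>2)"
    using DERIV_tan[OF c] by (rule DERIV_imp_deriv)
  also have "\<dots> = 1 + tan w * tan w"
    using c sin_cos_squared_add[of w]
    by (simp add: tan_def field_simps power2_eq_square)
  finally show ?thesis .
qed

definition dtan :: "nat \<Rightarrow> complex" where "dtan n = (deriv ^^ n) tan 0"

lemma dtan_rec:
  "dtan (Suc n) = (if n = 0 then 1 else 0) +
     (\<Sum>i = 0..n. of_nat (n choose i) * dtan i * dtan (n - i))"
proof -
  let ?S = "ball (0::complex) (pi/2)"
  have op: "open ?S" by simp
  have z: "0 \<in> ?S" by simp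
  have "dtan (Suc n) = (deriv ^^ n) (deriv tan) 0"
    unfolding dtan_def funpow_Suc_right comp_def by (rule refl)
  also have "\<dots> = (deriv ^^ n) (\<lambda>w. 1 + tan w * tan w) 0"
  proof (rule higher_deriv_cong_ev)
    show "\<forall>\<^sub>F x::complex in nhds 0. deriv tan x = 1 + tan x * tan x"
      by (rule eventually_mono[OF eventually_nhds_in_open[OF op z]]) (auto intro!: deriv_tan_eq)
  qed simp
  also have "\<dots> = (deriv ^^ n) (\<lambda>w. 1) 0 + (deriv ^^ n) (\<lambda>w. tan w * tan w) 0"
    by (rule higher_deriv_add[OF _ _ op z]) (auto intro!: holomorphic_intros tan_holo)
  also have "(deriv ^^ n) (\<lambda>w. tan w * tan w) (0::complex) =
      (\<Sum>i = 0..n. of_nat (n choose i) * (deriv ^^ i) tan 0 * (deriv ^^ (n-i)) tan 0)"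
    using higher_deriv_mult[OF tan_holo tan_holo op z, of n] by simp
  finally show ?thesis by (simp add: dtan_def)
qed

lemma holo_digamma_lin:
  fixes u c :: complex
  assumes "\<And>w. w \<in> S \<Longrightarrow> Re (u * w + c) > 0"
  shows "(\<lambda>w. Digamma (u * w + c)) holomorphic_on S"
proof -
  have T: "Digamma holomorphic_on {z. Re z > 0}"
  proof (rule holomorphic_on_Polygamma)
    show "{z::complex. Re z > 0} \<inter> \<int>\<^sub>\<le>\<^sub>0 = {}"
      by (auto elim!: nonpos_Ints_cases)
  qed
  have "(Digamma \<circ> (\<lambda>w. u * w + c)) holomorphic_on S"
    by (rule holomorphic_on_compose_gen[OF _ T]) (auto intro!: holomorphic_intros assms)
  then show ?thesis by (simp add: o_def)
qed



lemma polygamma_dtan: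
  "Polygamma n (1/2 :: complex) - (-1)^n * Polygamma n (1/2) = of_real pi ^ Suc n * dtan n"
proof -
  let ?S = "ball (0::complex) (1/2)"
  let ?T = "{z::complex. Re z > 0}"
  have op: "open ?S" by simp
  have z: "0 \<in> ?S" by simp
  have opT: "open ?T" by (simp add: open_halfspace_Re_gt)
  have re: "Re (1 * v + 1/2) > 0" "Re ((-1) * v + 1/2) > 0" if "v \<in> ?S" for v :: complex
    using that abs_Re_le_cmod[of v] by (auto simp: dist_norm)
  have T: "Digamma holomorphic_on ?T"
  proof (rule holomorphic_on_Polygamma)
    show "?T \<inter> \<int>\<^sub>\<le>\<^sub>0 = {}"
      by (auto elim!: nonpos_Ints_cases)
  qed
  have "(deriv ^^ n) (\<lambda>w::complex. Digamma (1 * w + 1/2) - Digamma ((-1) * w + 1/2)) 0 =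
        (deriv ^^ n) (\<lambda>w. of_real pi * tan (of_real pi * w)) 0"
  proof (rule higher_deriv_cong_ev)
    show "\<forall>\<^sub>F x::complex in nhds 0. Digamma (1 * x + 1/2) - Digamma ((-1) * x + 1/2) = of_real pi * tan (of_real pi * x)"
      by (rule eventually_mono[OF eventually_nhds_in_open[OF op z]]) (use digamma_tan in \<open>auto simp: add.commute\<close>)
  qed simp
  moreover have "(deriv ^^ n) (\<lambda>w::complex. Digamma (1 * w + 1/2) - Digamma ((-1) * w + 1/2)) 0 =
      (deriv ^^ n) (\<lambda>w. Digamma (1 * w + 1/2)) 0 - (deriv ^^ n) (\<lambda>w. Digamma ((-1) * w + 1/2)) 0"
  proof -
    have h1: "(\<lambda>w. Digamma (1*w+1/2)) holomorphic_on ?S" by (rule holo_digamma_lin) (rule re)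
    have h2: "(\<lambda>w. Digamma ((-1)*w+1/2)) holomorphic_on ?S" by (rule holo_digamma_lin) (rule re)
    show ?thesis by (rule higher_deriv_diff[OF h1 h2 op z])
  qed
  moreover have "(deriv ^^ n) (\<lambda>w::complex. Digamma (1 * w + 1/2)) 0 = 1 ^ n * (deriv ^^ n) Digamma (1 * 0 + 1/2)"
    by (rule higher_deriv_compose_linear'[OF T op opT z]) (use re in auto)
  moreover have "(deriv ^^ n) (\<lambda>w::complex. Digamma ((-1) * w + 1/2)) 0 = (-1) ^ n * (deriv ^^ n) Digamma ((-1) * 0 + 1/2)"
    by (rule higher_deriv_compose_linear'[OF T op opT z]) (use re in auto)
  moreover have "(deriv ^^ n) Digamma (1/2 :: complex) = Polygamma n (1/2)"
  proof -
    have "(1/2::complex) \<notin> \<int>\<^sub>\<le>\<^sub>0" by (auto elim!: nonpos_Ints_cases simp: complex_eq_iff)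
    then show ?thesis using higher_deriv_Polygamma[of "1/2::complex" n 0] by simp
  qed
  moreover have "(deriv ^^ n) (\<lambda>w::complex. of_real pi * tan (of_real pi * w)) 0 =
      of_real pi * (deriv ^^ n) (\<lambda>w. tan (of_real pi * w)) 0"
    by (rule higher_deriv_cmult[OF _ z op]) (auto intro!: holomorphic_on_compose_gen[OF _ tan_holo, unfolded o_def] holomorphic_intros simp: norm_mult)
  moreover have "(deriv ^^ n) (\<lambda>w::complex. tan (of_real pi * w)) 0 = of_real pi ^ n * (deriv ^^ n) tan (of_real pi * 0)"
    by (rule higher_deriv_compose_linear[OF tan_holo op _ z]) (auto simp: norm_mult)
  ultimately show ?thesis by (simp add: dtan_def mult.assoc)
qed



definition zz :: "nat list \<Rightarrow> bool" where
  "zz xs \<longleftrightarrow> (\<forall>i. Suc i < length xs \<longrightarrow> (if even i then xs!i < xs!Suc i else xs!Suc i < xs!i))"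

definition Z :: "nat set \<Rightarrow> nat list set" where
  "Z S = {xs. distinct xs \<and> set xs = S \<and> zz xs}"

definition E :: "nat \<Rightarrow> nat" where
  "E m = card (Z {..<m})"

lemma zz_take: "zz xs \<Longrightarrow> zz (take k xs)"
  unfolding zz_def by auto

lemma zz_drop:
  assumes "zz xs" "even k"
  shows "zz (drop k xs)"
  unfolding zz_def
proof (intro allI impI)
  fix i assume i: "Suc i < length (drop k xs)"
  then have i': "Suc (k + i) < length xs" by simp
  have "even (k + i) \<longleftrightarrow> even i" using assms(2) by simp
  with assms(1) i' show "if even i then drop k xs ! i < drop k xs ! Suc i else drop k xs ! Suc i < drop k xs ! i"
    unfolding zz_def by (auto simp: nth_drop split: if_splits)
qed

lemma zz_append:
  assumes odd: "odd (length ys)" and ys: "\<forall>y\<in>set ys. y < M" and zs: "\<forall>z\<in>set zs. z < M"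
    and zy: "zz ys" and zzs: "zz zs"
  shows "zz (ys @ M # zs)"
  unfolding zz_def
proof (intro allI impI)
  fix i assume i: "Suc i < length (ys @ M # zs)"
  let ?xs = "ys @ M # zs"
  show "if even i then ?xs ! i < ?xs ! Suc i else ?xs ! Suc i < ?xs ! i"
  proof (cases "Suc i < length ys")
    case True
    then show ?thesis using zy unfolding zz_def by (auto simp: nth_append)
  next
    case False
    show ?thesis
    proof (cases "Suc i = length ys")
      case True
      then have "odd (Suc i)" using odd by simp
      then have "even i" by simp
      moreover have "?xs ! i = ys ! i" using True by (simp add: nth_append)
      moreover have "ys ! i \<in> set ys" using True by simp
      moreover have "?xs ! Suc i = M" using True by (simp add: nth_append)
      ultimately show ?thesis using ys by auto
    next
      case False2: False
      show ?thesis
      proof (cases "i = length ys")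
        case True
        then have "odd i" using odd by auto
        have zne: "zs \<noteq> []" using i True by auto
        have "?xs ! i = M" using True by (simp add: nth_append)
        moreover have "?xs ! Suc i = zs ! 0" using True by (simp add: nth_append)
        moreover have "zs ! 0 \<in> set zs" using zne by simp
        ultimately show ?thesis using zs \<open>odd i\<close> by auto
      next
        case False3: False
        then obtain j where j: "i = length ys + Suc j" using False False2
          by (metis add_Suc_right less_imp_Suc_add linorder_neqE_nat not_less_eq)
        have jl: "Suc j < length zs" using i j by simp
        have e: "even i \<longleftrightarrow> even j" using j odd by simp
        have "?xs ! i = zs ! j" using j by (simp add: nth_append)
        moreover have "?xs ! Suc i = zs ! Suc j" using j by (simp add: nth_append)
        ultimately show ?thesis using zzs jl e unfolding zz_def by auto
      qed
    qed
  qed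
qed

lemma finite_Z: "finite S \<Longrightarrow> finite (Z S)"
  by (rule finite_subset[OF _ finite_subset_distinct[of S]]) (auto simp: Z_def)

lemma card_Z_iso:
  fixes f :: "nat \<Rightarrow> nat"
  assumes mono: "\<And>x y. x \<in> S \<Longrightarrow> y \<in> S \<Longrightarrow> x < y \<Longrightarrow> f x < f y"
  shows "card (Z (f ` S)) = card (Z S)"
proof -
  have inj: "inj_on f S"
    by (rule inj_onI) (metis mono linorder_neqE_nat less_irrefl)
  have iff: "f x < f y \<longleftrightarrow> x < y" if "x \<in> S" "y \<in> S" for x y
    using mono[OF that] mono[OF that(2,1)] inj that
    by (metis inj_on_eq_iff linorder_neqE_nat order_less_asym)
  have injm: "inj_on (map f) (Z S)"
    by (rule inj_on_mapI, rule inj_on_subset[OF inj]) (auto simp: Z_def)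
  have img: "map f ` Z S = Z (f ` S)"
  proof
    show "map f ` Z S \<subseteq> Z (f ` S)"
    proof
      fix ys assume "ys \<in> map f ` Z S"
      then obtain xs where xs: "xs \<in> Z S" "ys = map f xs" by auto
      have d: "distinct ys" using xs inj by (auto simp: Z_def distinct_map intro: inj_on_subset)
      have s: "set ys = f ` S" using xs by (auto simp: Z_def)
      have "zz ys" using xs unfolding Z_def zz_def
        by (auto simp: iff)
      then show "ys \<in> Z (f ` S)" using d s by (simp add: Z_def)
    qed
  next
    show "Z (f ` S) \<subseteq> map f ` Z S"
    proof
      fix ys assume ys: "ys \<in> Z (f ` S)"
      define g where "g = the_inv_into S f"
      have fg: "f (g y) = y" if "y \<in> f ` S" for y
        using f_the_inv_into_f[OF inj that] by (simp add: g_def)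
      have gS: "g y \<in> S" if "y \<in> f ` S" for y
        using the_inv_into_into[OF inj that] by (simp add: g_def)
      have giff: "g a < g b \<longleftrightarrow> a < b" if "a \<in> f ` S" "b \<in> f ` S" for a b
        using iff[OF gS[OF that(1)] gS[OF that(2)]] fg that by simp
      have ginj: "inj_on g (f ` S)"
        by (rule inj_onI) (metis fg)
      define xs where "xs = map g ys"
      have "map f xs = ys" unfolding xs_def using ys by (auto simp: Z_def fg intro!: map_idI)
      moreover have "xs \<in> Z S"
      proof -
        have "distinct xs" unfolding xs_def using ys ginj
          by (auto simp: Z_def distinct_map)
        moreover have "set xs = S" unfolding xs_def using ys
          by (auto simp: Z_def image_image inj the_inv_into_f_f g_def)
        moreover have "zz xs" unfolding zz_def xs_def
        proof (intro allI impI)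
          fix i assume i: "Suc i < length (map g ys)"
          then have m: "ys!i \<in> f`S" "ys!Suc i \<in> f`S" using ys by (auto simp: Z_def dest: nth_mem)
          have "if even i then ys ! i < ys ! Suc i else ys ! Suc i < ys ! i"
            using ys i unfolding Z_def zz_def by auto
          then show "if even i then map g ys ! i < map g ys ! Suc i else map g ys ! Suc i < map g ys ! i"
            using i giff[OF m] giff[OF m(2,1)] by auto
        qed
        ultimately show ?thesis by (simp add: Z_def)
      qed
      ultimately show "ys \<in> map f ` Z S" by blast
    qed
  qed
  show ?thesis using card_image[OF injm] img by simp
qed

lemma card_Z: 
  assumes "finite S"
  shows "card (Z S) = E (card S)"
proof -
  define L where "L = sorted_list_of_set S"
  define f where "f i = L ! i" for i
  have len: "length L = card S" by (simp add: L_def)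
  have sw: "sorted_wrt (<) L" by (simp add: L_def)
  have img: "f ` {..<card S} = S"
  proof -
    have "f ` {..<card S} = set L" by (auto simp: f_def len in_set_conv_nth)
    then show ?thesis using assms by (simp add: L_def)
  qed
  have "card (Z (f ` {..<card S})) = card (Z {..<card S})"
    by (rule card_Z_iso) (auto simp: f_def intro!: sorted_wrt_nth_less[OF sw] simp: len)
  then show ?thesis using img by (simp add: E_def)
qed



lemma sum_pow_card:
  fixes g :: "nat \<Rightarrow> nat"
  assumes "finite S"
  shows "(\<Sum>A\<in>Pow S. g (card A)) = (\<Sum>i=0..card S. (card S choose i) * g i)"
proof -
  have "(\<Sum>A\<in>Pow S. g (card A)) = (\<Sum>i\<in>{0..card S}. \<Sum>A\<in>{A. A \<in> Pow S \<and> card A = i}. g (card A))"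
    by (rule sum.group[symmetric]) (use assms in \<open>auto simp: card_mono\<close>)
  also have "\<dots> = (\<Sum>i\<in>{0..card S}. (card S choose i) * g i)"
  proof (rule sum.cong[OF refl])
    fix i
    have "(\<Sum>A\<in>{A. A\<in>Pow S \<and> card A = i}. g (card A)) = (\<Sum>A\<in>{A. A\<in>Pow S \<and> card A = i}. g i)"
      by (rule sum.cong) auto
    moreover have "card {A. A\<in>Pow S \<and> card A = i} = card S choose i"
      using n_subsets[OF assms, of i] by (simp add: Pow_def)
    ultimately show "(\<Sum>A\<in>{A. A\<in>Pow S \<and> card A = i}. g (card A)) = (card S choose i) * g i"
      by simp
  qed
  finally show ?thesis .
qed

lemma split_unique:
  assumes "m \<notin> set ys" "m \<notin> set ys'" "ys @ m # zs = ys' @ m # zs'"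
  shows "ys = ys' \<and> zs = zs'"
proof -
  have t: "takeWhile (\<lambda>x. x \<noteq> m) (ys @ m # zs) = ys" if "m \<notin> set ys" for ys zs
    using that by (subst takeWhile_append2) auto
  have "ys = ys'" using t[OF assms(1), of zs] t[OF assms(2), of zs'] assms(3) by simp
  with assms(3) show ?thesis by simp
qed

lemma E_rec:
  assumes em: "even m" and m2: "m \<ge> 2"
  shows "E (Suc m) = (\<Sum>i=0..m. if odd i then (m choose i) * (E i * E (m-i)) else 0)"
proof -
  define S' where "S' = {..<m}"
  define I where "I = {A. A \<in> Pow S' \<and> odd (card A)}"
  define W where "W = (\<Union>A\<in>I. Z A \<times> Z (S' - A))"
  define \<phi> where "\<phi> = (\<lambda>(ys, zs). ys @ m # zs)"
  have fS: "finite S'" by (simp add: S'_def)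
  have fI: "finite I" unfolding I_def using fS by simp
  have img: "\<phi> ` W = Z {..<Suc m}"
  proof
    show "\<phi> ` W \<subseteq> Z {..<Suc m}"
    proof
      fix xs assume "xs \<in> \<phi> ` W"
      then obtain A ys zs where A: "A \<in> I" and ys: "ys \<in> Z A" and zs: "zs \<in> Z (S' - A)"
        and xs: "xs = ys @ m # zs"
        unfolding W_def \<phi>_def by auto
      have AS: "A \<subseteq> S'" and oA: "odd (card A)" using A by (auto simp: I_def)
      have sy: "set ys = A" "distinct ys" "zz ys" using ys by (auto simp: Z_def)
      have sz: "set zs = S' - A" "distinct zs" "zz zs" using zs by (auto simp: Z_def)
      have "distinct xs" using xs sy sz AS by (auto simp: S'_def)
      moreover have "set xs = {..<Suc m}" using xs sy sz AS by (auto simp: S'_def)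
      moreover have "zz xs" unfolding xs
      proof (rule zz_append)
        show "odd (length ys)" using oA distinct_card[OF sy(2)] sy(1) by simp
      qed (use sy sz AS in \<open>auto simp: S'_def\<close>)
      ultimately show "xs \<in> Z {..<Suc m}" by (simp add: Z_def)
    qed
  next
    show "Z {..<Suc m} \<subseteq> \<phi> ` W"
    proof
      fix xs assume xs: "xs \<in> Z {..<Suc m}"
      have d: "distinct xs" and s: "set xs = {..<Suc m}" and z: "zz xs" using xs by (auto simp: Z_def)
      have len: "length xs = Suc m" using distinct_card[OF d] s by simp
      have "m \<in> set xs" using s by simp
      then obtain p where p: "p < Suc m" "xs ! p = m" by (auto simp: in_set_conv_nth len)
      have le: "xs ! j \<le> m" if "j < Suc m" for j
        using nth_mem[of j xs] that s len by auto
      have op: "odd p"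
      proof
        assume ep: "even p"
        show False
        proof (cases "p < m")
          case True
          then have "xs ! p < xs ! Suc p" using z ep len unfolding zz_def by auto
          with p le[of "Suc p"] True show False by simp
        next
          case False
          then have pm: "p = m" using p by simp
          then obtain i where i: "p = Suc i" using m2 by (cases p) auto
          have "odd i" using ep i by simp
          then have "xs ! Suc i < xs ! i" using z i len p unfolding zz_def by auto
          with p i le[of i] show False by simp
        qed
      qed
      define ys where "ys = take p xs"
      define zs where "zs = drop (Suc p) xs"
      have xs_eq: "xs = ys @ m # zs" unfolding ys_def zs_def using id_take_nth_drop[of p xs] p len by simp
      have d2: "distinct (ys @ m # zs)" using d xs_eq by simp
      have s2: "set ys \<union> {m} \<union> set zs = {..<Suc m}" using s xs_eq by auto
      define A where "A = set ys"
      have AS: "A \<subseteq> S'"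
      proof
        fix x assume "x \<in> A"
        then have "x \<in> {..<Suc m}" "x \<noteq> m" using d2 s2 by (auto simp: A_def)
        then show "x \<in> S'" by (auto simp: S'_def)
      qed
      have cA: "card A = p" using d2 p len by (simp add: A_def distinct_card ys_def)
      have zsS: "set zs = S' - A"
      proof
        show "set zs \<subseteq> S' - A"
        proof
          fix x assume x: "x \<in> set zs"
          then have "x \<in> {..<Suc m}" "x \<noteq> m" "x \<notin> A" using d2 s2 by (auto simp: A_def)
          then show "x \<in> S' - A" by (auto simp: S'_def)
        qed
        show "S' - A \<subseteq> set zs"
        proof
          fix x assume x: "x \<in> S' - A"
          then have "x \<in> {..<Suc m}" "x \<noteq> m" "x \<notin> set ys" by (auto simp: A_def S'_def)
          then show "x \<in> set zs" using s2 by blast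
        qed
      qed
      have "A \<in> I" using AS cA op by (simp add: I_def)
      moreover have "ys \<in> Z A" using d2 zz_take[OF z] by (simp add: Z_def A_def ys_def)
      moreover have "zs \<in> Z (S' - A)" using d2 zz_drop[OF z, of "Suc p"] op zsS by (simp add: Z_def zs_def)
      ultimately have "(ys, zs) \<in> W" unfolding W_def by blast
      then show "xs \<in> \<phi> ` W" using xs_eq unfolding \<phi>_def by force
    qed
  qed
  have inj: "inj_on \<phi> W"
  proof (rule inj_onI)
    fix a b assume a: "a \<in> W" and b: "b \<in> W" and e: "\<phi> a = \<phi> b"
    obtain ys zs where a': "a = (ys, zs)" by (cases a)
    obtain ys' zs' where b': "b = (ys', zs')" by (cases b)
    have "m \<notin> set ys" using a a' by (auto simp: W_def Z_def I_def S'_def)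
    moreover have "m \<notin> set ys'" using b b' by (auto simp: W_def Z_def I_def S'_def)
    moreover have "ys @ m # zs = ys' @ m # zs'" using e a' b' by (simp add: \<phi>_def)
    ultimately have "ys = ys' \<and> zs = zs'" by (rule split_unique)
    then show "a = b" using a' b' by simp
  qed
  have cW: "card W = (\<Sum>A\<in>I. E (card A) * E (m - card A))"
  proof -
    have "card W = (\<Sum>A\<in>I. card (Z A \<times> Z (S' - A)))"
      unfolding W_def
    proof (rule card_UN_disjoint[OF fI])
      show "\<forall>A\<in>I. finite (Z A \<times> Z (S' - A))"
        using fS by (auto simp: I_def intro!: finite_Z intro: finite_subset)
      show "\<forall>A\<in>I. \<forall>B\<in>I. A \<noteq> B \<longrightarrow> (Z A \<times> Z (S' - A)) \<inter> (Z B \<times> Z (S' - B)) = {}"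
        by (auto simp: Z_def)
    qed
    also have "\<dots> = (\<Sum>A\<in>I. E (card A) * E (m - card A))"
    proof (rule sum.cong[OF refl])
      fix A assume "A \<in> I"
      then have AS: "A \<subseteq> S'" by (simp add: I_def)
      then have fA: "finite A" using fS finite_subset by blast
      have "card (S' - A) = m - card A" using AS fA by (simp add: card_Diff_subset S'_def)
      then show "card (Z A \<times> Z (S' - A)) = E (card A) * E (m - card A)"
        using card_Z[OF fA] card_Z[of "S' - A"] fS by (simp add: card_cartesian_product)
    qed
    finally show ?thesis .
  qed
  have "E (Suc m) = card W"
    unfolding E_def using card_image[OF inj] img by simp
  also have "\<dots> = (\<Sum>A\<in>Pow S'. (\<lambda>i. if odd i then E i * E (m - i) else 0) (card A))"
    unfolding cW I_def using sum.inter_filter[of "Pow S'" "\<lambda>A. E (card A) * E (m - card A)" "\<lambda>A. odd (card A)"] fS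
    by simp
  also have "\<dots> = (\<Sum>i=0..card S'. (card S' choose i) * (if odd i then E i * E (m - i) else 0))"
    by (rule sum_pow_card[OF fS])
  also have "\<dots> = (\<Sum>i=0..m. if odd i then (m choose i) * (E i * E (m-i)) else 0)"
    by (auto simp: S'_def intro!: sum.cong)
  finally show ?thesis .
qed



definition CL :: "nat \<Rightarrow> nat list set" where
  "CL n = {xs. distinct xs \<and> set xs = {1..n} \<and> zz xs \<and> xs!0 < xs!(n-1)}"

lemma CA_iff:
  "cyclically_alternating n \<sigma> \<longleftrightarrow>
    (\<forall>j. Suc j < n \<longrightarrow> (if even j then \<sigma> (Suc j) < \<sigma> (Suc (Suc j)) else \<sigma> (Suc (Suc j)) < \<sigma> (Suc j)))
    \<and> \<sigma> 1 < \<sigma> n"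
proof -
  have "(\<forall>i\<in>{1..n-1}. (odd i \<longrightarrow> \<sigma> i < \<sigma> (i+1)) \<and> (even i \<longrightarrow> \<sigma> i > \<sigma> (i+1))) \<longleftrightarrow>
    (\<forall>j. Suc j < n \<longrightarrow> (if even j then \<sigma> (Suc j) < \<sigma> (Suc (Suc j)) else \<sigma> (Suc (Suc j)) < \<sigma> (Suc j)))"
  proof
    assume H: "\<forall>i\<in>{1..n-1}. (odd i \<longrightarrow> \<sigma> i < \<sigma> (i+1)) \<and> (even i \<longrightarrow> \<sigma> i > \<sigma> (i+1))"
    show "\<forall>j. Suc j < n \<longrightarrow> (if even j then \<sigma> (Suc j) < \<sigma> (Suc (Suc j)) else \<sigma> (Suc (Suc j)) < \<sigma> (Suc j))"
    proof (intro allI impI)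
      fix j assume "Suc j < n"
      then have "Suc j \<in> {1..n-1}" by auto
      with H show "if even j then \<sigma> (Suc j) < \<sigma> (Suc (Suc j)) else \<sigma> (Suc (Suc j)) < \<sigma> (Suc j)"
        by auto
    qed
  next
    assume H: "\<forall>j. Suc j < n \<longrightarrow> (if even j then \<sigma> (Suc j) < \<sigma> (Suc (Suc j)) else \<sigma> (Suc (Suc j)) < \<sigma> (Suc j))"
    show "\<forall>i\<in>{1..n-1}. (odd i \<longrightarrow> \<sigma> i < \<sigma> (i+1)) \<and> (even i \<longrightarrow> \<sigma> i > \<sigma> (i+1))"
    proof
      fix i assume i: "i \<in> {1..n-1}"
      then obtain j where j: "i = Suc j" by (cases i) auto
      have "Suc j < n" using i j by auto
      with H j show "(odd i \<longrightarrow> \<sigma> i < \<sigma> (i+1)) \<and> (even i \<longrightarrow> \<sigma> i > \<sigma> (i+1))"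
        by (auto split: if_splits)
    qed
  qed
  then show ?thesis unfolding cyclically_alternating_def by simp
qed

lemma A0_CL:
  assumes n2: "n \<ge> 2"
  shows "A0 n = card (CL n)"
proof -
  define P where "P = {\<sigma>. \<sigma> permutes {1..n} \<and> cyclically_alternating n \<sigma>}"
  define \<phi> where "\<phi> \<sigma> = map \<sigma> [1..<Suc n]" for \<sigma> :: "nat \<Rightarrow> nat"
  have nth\<phi>: "\<phi> \<sigma> ! i = \<sigma> (Suc i)" if "i < n" for \<sigma> i
    using that by (simp add: \<phi>_def nth_upt del: upt_Suc)
  have len\<phi>: "length (\<phi> \<sigma>) = n" for \<sigma> by (simp add: \<phi>_def del: upt_Suc)
  have conv: "cyclically_alternating n \<sigma> \<longleftrightarrow> zz (\<phi> \<sigma>) \<and> \<phi> \<sigma> ! 0 < \<phi> \<sigma> ! (n-1)" for \<sigma>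
  proof -
    have "zz (\<phi> \<sigma>) \<longleftrightarrow> (\<forall>j. Suc j < n \<longrightarrow> (if even j then \<sigma> (Suc j) < \<sigma> (Suc (Suc j)) else \<sigma> (Suc (Suc j)) < \<sigma> (Suc j)))"
      unfolding zz_def len\<phi> by (auto simp: nth\<phi>)
    moreover have "\<phi> \<sigma> ! 0 = \<sigma> 1" "\<phi> \<sigma> ! (n-1) = \<sigma> n" using n2 by (auto simp: nth\<phi>)
    ultimately show ?thesis by (simp add: CA_iff)
  qed
  have inj: "inj_on \<phi> P"
  proof (rule inj_onI)
    fix \<sigma> \<tau> assume s: "\<sigma> \<in> P" and t: "\<tau> \<in> P" and e: "\<phi> \<sigma> = \<phi> \<tau>"
    have ps: "\<sigma> permutes {1..n}" and pt: "\<tau> permutes {1..n}" using s t by (auto simp: P_def)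
    have "\<forall>x\<in>set [1..<Suc n]. \<sigma> x = \<tau> x" using e unfolding \<phi>_def by (simp only: map_eq_conv)
    then have H: "\<forall>x\<in>{1..n}. \<sigma> x = \<tau> x" by (simp only: set_upt atLeastLessThanSuc_atLeastAtMost)
    have "\<sigma> x = \<tau> x" for x
      using permutes_not_in[OF ps, of x] permutes_not_in[OF pt, of x] H by (cases "x \<in> {1..n}") auto
    then show "\<sigma> = \<tau>" by auto
  qed
  have img: "\<phi> ` P = CL n"
  proof
    show "\<phi> ` P \<subseteq> CL n"
    proof
      fix xs assume "xs \<in> \<phi> ` P"
      then obtain \<sigma> where s: "\<sigma> \<in> P" and xs: "xs = \<phi> \<sigma>" by auto
      have ps: "\<sigma> permutes {1..n}" and ca: "cyclically_alternating n \<sigma>" using s by (auto simp: P_def)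
      have "distinct xs" unfolding xs \<phi>_def
        by (simp add: distinct_map permutes_inj_on[OF ps])
      moreover have "set xs = {1..n}" unfolding xs \<phi>_def
        using permutes_image[OF ps] by (simp only: set_map set_upt atLeastLessThanSuc_atLeastAtMost)
      ultimately show "xs \<in> CL n" using ca conv xs by (simp add: CL_def)
    qed
  next
    show "CL n \<subseteq> \<phi> ` P"
    proof
      fix xs assume xs: "xs \<in> CL n"
      have d: "distinct xs" and s: "set xs = {1..n}" using xs by (auto simp: CL_def)
      have len: "length xs = n" using distinct_card[OF d] s by simp
      define \<sigma> where "\<sigma> x = (if x \<in> {1..n} then xs ! (x - 1) else x)" for x
      have bij: "bij_betw \<sigma> {1..n} {1..n}"
      proof (rule bij_betw_imageI)
        show "inj_on \<sigma> {1..n}"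
        proof (rule inj_onI)
          fix x y assume x: "x \<in> {1..n}" and y: "y \<in> {1..n}" and e: "\<sigma> x = \<sigma> y"
          then have "xs ! (x - 1) = xs ! (y - 1)" by (simp add: \<sigma>_def)
          then have "x - 1 = y - 1" using nth_eq_iff_index_eq[OF d, of "x-1" "y-1"] x y len by auto
          then show "x = y" using x y by auto
        qed
        show "\<sigma> ` {1..n} = {1..n}"
        proof -
          have "\<sigma> ` {1..n} = (\<lambda>i. xs ! i) ` {..<n}"
          proof (rule set_eqI, rule iffI)
            fix y assume "y \<in> \<sigma> ` {1..n}"
            then obtain x where "x \<in> {1..n}" "y = \<sigma> x" by auto
            then show "y \<in> (\<lambda>i. xs ! i) ` {..<n}" by (auto simp: \<sigma>_def intro!: image_eqI[of _ _ "x - 1"])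
          next
            fix y assume "y \<in> (\<lambda>i. xs ! i) ` {..<n}"
            then obtain i where "i < n" "y = xs ! i" by auto
            then show "y \<in> \<sigma> ` {1..n}" by (auto simp: \<sigma>_def intro!: image_eqI[of _ _ "Suc i"])
          qed
          also have "\<dots> = set xs" by (auto simp: in_set_conv_nth len)
          finally show ?thesis using s by simp
        qed
      qed
      have ps: "\<sigma> permutes {1..n}"
        by (rule bij_imp_permutes[OF bij]) (auto simp: \<sigma>_def)
      have xs\<phi>: "\<phi> \<sigma> = xs"
        by (rule nth_equalityI) (auto simp: len len\<phi> nth\<phi> \<sigma>_def)
      have "cyclically_alternating n \<sigma>" using conv xs xs\<phi> by (simp add: CL_def)
      then have "\<sigma> \<in> P" using ps by (simp add: P_def)
      then show "xs \<in> \<phi> ` P" using xs\<phi> by force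
    qed
  qed
  show ?thesis unfolding A0_def P_def[symmetric] using card_image[OF inj] img by simp
qed



definition cz :: "nat \<Rightarrow> nat list \<Rightarrow> bool" where
  "cz n xs \<longleftrightarrow> (\<forall>i<n. if even i then xs!i < xs!(Suc i mod n) else xs!(Suc i mod n) < xs!i)"

lemma cz_iff:
  assumes len: "length xs = n" and en: "even n" and n2: "n \<ge> 2"
  shows "cz n xs \<longleftrightarrow> zz xs \<and> xs!0 < xs!(n-1)"
proof
  assume c: "cz n xs"
  have "zz xs" unfolding zz_def
  proof (intro allI impI)
    fix i assume "Suc i < length xs"
    then have "i < n" "Suc i mod n = Suc i" using len by auto
    then show "if even i then xs ! i < xs ! Suc i else xs ! Suc i < xs ! i"
      using c unfolding cz_def by metis
  qed
  moreover have "xs!0 < xs!(n-1)"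
  proof -
    have "n - 1 < n" "odd (n - 1)" "Suc (n - 1) mod n = 0" using n2 en by auto
    then show ?thesis using c unfolding cz_def by (metis (full_types))
  qed
  ultimately show "zz xs \<and> xs!0 < xs!(n-1)" by simp
next
  assume H: "zz xs \<and> xs!0 < xs!(n-1)"
  show "cz n xs" unfolding cz_def
  proof (intro allI impI)
    fix i assume i: "i < n"
    show "if even i then xs ! i < xs ! (Suc i mod n) else xs ! (Suc i mod n) < xs ! i"
    proof (cases "Suc i < n")
      case True
      then show ?thesis using H len unfolding zz_def by auto
    next
      case False
      then have si: "Suc i = n" using i by simp
      then have "i = n - 1" "Suc i mod n = 0" by auto
      moreover have "odd (n - 1)" using en n2 by auto
      ultimately show ?thesis using H by auto
    qed
  qed
qed

lemma cz_rotate: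
  assumes len: "length xs = n" and en: "even n" and ek: "even k" and c: "cz n xs"
  shows "cz n (rotate k xs)"
  unfolding cz_def
proof (intro allI impI)
  fix i assume i: "i < n"
  then have n0: "n > 0" by simp
  define j where "j = (k + i) mod n"
  have j: "j < n" using n0 by (simp add: j_def)
  have r1: "rotate k xs ! i = xs ! j" using i len by (simp add: nth_rotate j_def)
  have "Suc i mod n < n" using n0 by simp
  then have r2: "rotate k xs ! (Suc i mod n) = xs ! ((k + Suc i mod n) mod n)" using len by (simp add: nth_rotate)
  have "(k + Suc i mod n) mod n = Suc j mod n"
    unfolding j_def by (simp add: mod_add_right_eq mod_Suc_eq)
  with r2 have r2': "rotate k xs ! (Suc i mod n) = xs ! (Suc j mod n)" by simp
  have "j mod 2 = (k + i) mod 2" unfolding j_def using en by (simp add: mod_mod_cancel)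
  then have par: "even j \<longleftrightarrow> even i" using ek by (auto simp: even_iff_mod_2_eq_zero)
  have "if even j then xs ! j < xs ! (Suc j mod n) else xs ! (Suc j mod n) < xs ! j"
    using c j unfolding cz_def by blast
  then show "if even i then rotate k xs ! i < rotate k xs ! (Suc i mod n) else rotate k xs ! (Suc i mod n) < rotate k xs ! i"
    using r1 r2' par by simp
qed

lemma inj_rotate: "inj (rotate k)"
  unfolding rotate_def by (rule inj_fn[OF inj_rotate1])

definition CL' :: "nat \<Rightarrow> nat list set" where
  "CL' n = {xs. distinct xs \<and> set xs = {1..n} \<and> cz n xs}"

lemma CL_CL':
  assumes "even n" "n \<ge> 2"
  shows "CL n = CL' n"
proof -
  have "length xs = n" if "distinct xs" "set xs = {1..n}" for xs
    using distinct_card[OF that(1)] that(2) by simp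
  then show ?thesis using cz_iff[OF _ assms] unfolding CL_def CL'_def by auto
qed

lemma finite_CL': "finite (CL' n)"
  by (rule finite_subset[OF _ finite_subset_distinct[of "{1..n}"]]) (auto simp: CL'_def)

lemma card_CL':
  assumes en: "even n" and n2: "n \<ge> 2"
  shows "2 * card (CL' n) = n * E (n - 1)"
proof -
  define Cp where "Cp p = {xs \<in> CL' n. xs ! p = n}" for p
  define Od where "Od = {p. p < n \<and> odd p}"
  have lenCL: "length xs = n" if "xs \<in> CL' n" for xs
    using that distinct_card[of xs] by (auto simp: CL'_def)
  have le: "xs ! j \<le> n" if "xs \<in> CL' n" "j < n" for xs j
    using that nth_mem[of j xs] lenCL[OF that(1)] by (auto simp: CL'_def)
  have union: "CL' n = (\<Union>p\<in>Od. Cp p)"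
  proof
    show "CL' n \<subseteq> (\<Union>p\<in>Od. Cp p)"
    proof
      fix xs assume xs: "xs \<in> CL' n"
      have "n \<in> set xs" using xs n2 by (auto simp: CL'_def)
      then obtain p where p: "p < n" "xs ! p = n" using lenCL[OF xs] by (auto simp: in_set_conv_nth)
      have "odd p"
      proof
        assume "even p"
        then have "xs ! p < xs ! (Suc p mod n)" using xs p by (auto simp: CL'_def cz_def)
        moreover have "xs ! (Suc p mod n) \<le> n" by (rule le[OF xs]) (use p in simp)
        ultimately show False using p by simp
      qed
      then show "xs \<in> (\<Union>p\<in>Od. Cp p)" using p xs by (auto simp: Od_def Cp_def)
    qed
  qed (auto simp: Cp_def)
  have disj: "\<forall>p\<in>Od. \<forall>q\<in>Od. p \<noteq> q \<longrightarrow> Cp p \<inter> Cp q = {}"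
  proof (intro ballI impI)
    fix p q assume p: "p \<in> Od" and q: "q \<in> Od" and pq: "p \<noteq> q"
    show "Cp p \<inter> Cp q = {}"
    proof (rule ccontr)
      assume "Cp p \<inter> Cp q \<noteq> {}"
      then obtain xs where xs: "xs \<in> CL' n" "xs ! p = n" "xs ! q = n" by (auto simp: Cp_def)
      have "distinct xs" using xs by (simp add: CL'_def)
      then have "p = q" using nth_eq_iff_index_eq[of xs p q] xs p q lenCL[OF xs(1)] by (auto simp: Od_def)
      with pq show False by simp
    qed
  qed
  have fO: "finite Od" by (simp add: Od_def)
  have fC: "finite (Cp p)" for p using finite_CL' by (simp add: Cp_def)
  have same: "card (Cp p) = card (Cp (n - 1))" if p: "p \<in> Od" for p
  proof (rule antisym)
    have pn: "p < n" "odd p" using p by (auto simp: Od_def)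
    show "card (Cp p) \<le> card (Cp (n - 1))"
    proof (rule card_inj_on_le[OF _ _ fC])
      show "inj_on (rotate (Suc p)) (Cp p)" using inj_rotate by (auto intro: inj_on_subset)
      show "rotate (Suc p) ` Cp p \<subseteq> Cp (n - 1)"
      proof
        fix ys assume "ys \<in> rotate (Suc p) ` Cp p"
        then obtain xs where xs: "xs \<in> CL' n" "xs ! p = n" and ys: "ys = rotate (Suc p) xs"
          by (auto simp: Cp_def)
        have c: "cz n ys" unfolding ys
          by (rule cz_rotate[OF lenCL[OF xs(1)] en]) (use pn xs in \<open>auto simp: CL'_def\<close>)
        have "ys ! (n - 1) = xs ! ((Suc p + (n - 1)) mod n)"
          unfolding ys using n2 lenCL[OF xs(1)] nth_rotate[of "n - 1" xs "Suc p"] by simp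
        also have "(Suc p + (n - 1)) mod n = p" using pn n2 by simp
        finally show "ys \<in> Cp (n - 1)" using xs c unfolding ys by (auto simp: Cp_def CL'_def)
      qed
    qed
    show "card (Cp (n - 1)) \<le> card (Cp p)"
    proof (rule card_inj_on_le[OF _ _ fC])
      show "inj_on (rotate (n - Suc p)) (Cp (n - 1))" using inj_rotate by (auto intro: inj_on_subset)
      show "rotate (n - Suc p) ` Cp (n - 1) \<subseteq> Cp p"
      proof
        fix ys assume "ys \<in> rotate (n - Suc p) ` Cp (n - 1)"
        then obtain xs where xs: "xs \<in> CL' n" "xs ! (n - 1) = n" and ys: "ys = rotate (n - Suc p) xs"
          by (auto simp: Cp_def)
        have c: "cz n ys" unfolding ys
          by (rule cz_rotate[OF lenCL[OF xs(1)] en]) (use pn xs en in \<open>auto simp: CL'_def\<close>)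
        have "ys ! p = xs ! ((n - Suc p + p) mod n)"
          unfolding ys using pn lenCL[OF xs(1)] nth_rotate[of p xs "n - Suc p"] by simp
        also have "(n - Suc p + p) mod n = n - 1" using pn by simp
        finally show "ys \<in> Cp p" using xs c unfolding ys by (auto simp: Cp_def CL'_def)
      qed
    qed
  qed
  have last: "card (Cp (n - 1)) = E (n - 1)"
  proof -
    have eq: "Cp (n - 1) = (\<lambda>ys. ys @ [n]) ` Z {1..<n}"
    proof
      show "Cp (n - 1) \<subseteq> (\<lambda>ys. ys @ [n]) ` Z {1..<n}"
      proof
        fix xs assume xs: "xs \<in> Cp (n - 1)"
        then have xc: "xs \<in> CL' n" and xl: "xs ! (n - 1) = n" by (auto simp: Cp_def)
        have len: "length xs = n" using lenCL[OF xc] .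
        have d: "distinct xs" and s: "set xs = {1..n}" and c: "cz n xs" using xc by (auto simp: CL'_def)
        define ys where "ys = take (n - 1) xs"
        have tk: "take (Suc (n-1)) xs = take (n-1) xs @ [xs!(n-1)]"
          by (rule take_Suc_conv_app_nth) (use len n2 in simp)
        have sn: "Suc (n-1) = n" using n2 by simp
        have xs_eq: "xs = ys @ [n]"
          using tk len xl unfolding sn ys_def by simp
        have "zz xs" using cz_iff[OF len en n2] c by simp
        then have "zz ys" unfolding ys_def by (rule zz_take)
        moreover have "distinct ys" "n \<notin> set ys" using d xs_eq by auto
        moreover have "set ys = {1..<n}"
        proof -
          have "set ys \<union> {n} = {1..n}" using s xs_eq by simp
          with \<open>n \<notin> set ys\<close> have "set ys = {1..n} - {n}" by blast
          also have "{1..n} - {n} = {1..<n}" by auto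
          finally show ?thesis .
        qed
        ultimately have "ys \<in> Z {1..<n}" by (simp add: Z_def)
        then show "xs \<in> (\<lambda>ys. ys @ [n]) ` Z {1..<n}" using xs_eq by blast
      qed
      show "(\<lambda>ys. ys @ [n]) ` Z {1..<n} \<subseteq> Cp (n - 1)"
      proof
        fix xs assume "xs \<in> (\<lambda>ys. ys @ [n]) ` Z {1..<n}"
        then obtain ys where ys: "ys \<in> Z {1..<n}" and xs: "xs = ys @ [n]" by auto
        have d: "distinct ys" and s: "set ys = {1..<n}" and z: "zz ys" using ys by (auto simp: Z_def)
        have ly: "length ys = n - 1" using distinct_card[OF d] s by simp
        have len: "length xs = n" using ly xs n2 by simp
        have "distinct xs" using d s xs by simp
        moreover have "set xs = {1..n}" using s xs n2 by auto
        moreover have "zz xs" unfolding xs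
        proof -
          have "zz (ys @ n # [])"
            by (rule zz_append) (use ly en n2 s z in \<open>auto simp: zz_def\<close>)
          then show "zz (ys @ [n])" by simp
        qed
        moreover have "xs ! (n - 1) = n" using xs ly by (simp add: nth_append)
        moreover have "xs ! 0 < n"
        proof -
          have "ys \<noteq> []" using ly n2 by auto
          then have "xs ! 0 = ys ! 0" "ys ! 0 \<in> set ys" using xs by (auto simp: nth_append)
          then show ?thesis using s by auto
        qed
        ultimately have "cz n xs" "xs ! (n - 1) = n" using cz_iff[OF len en n2] by auto
        then show "xs \<in> Cp (n - 1)" using \<open>distinct xs\<close> \<open>set xs = {1..n}\<close> by (simp add: Cp_def CL'_def)
      qed
    qed
    have "inj_on (\<lambda>ys. ys @ [n]) (Z {1..<n})" by (rule inj_onI) simp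
    then have "card (Cp (n - 1)) = card (Z {1..<n})" using eq card_image by metis
    also have "\<dots> = E (n - 1)" using card_Z[of "{1..<n}"] by simp
    finally show ?thesis .
  qed
  have cO: "card Od = n div 2"
  proof -
    have "Od = (\<lambda>j. 2 * j + 1) ` {..<n div 2}"
    proof
      show "Od \<subseteq> (\<lambda>j. 2 * j + 1) ` {..<n div 2}"
      proof
        fix p assume "p \<in> Od"
        then have p: "p < n" "odd p" by (auto simp: Od_def)
        then have "p = 2 * (p div 2) + 1" by simp
        moreover have "p div 2 < n div 2" using p en by (auto elim!: evenE oddE)
        ultimately show "p \<in> (\<lambda>j. 2 * j + 1) ` {..<n div 2}" by blast
      qed
      show "(\<lambda>j. 2 * j + 1) ` {..<n div 2} \<subseteq> Od"
      proof
        fix p assume "p \<in> (\<lambda>j. 2 * j + 1) ` {..<n div 2}"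
        then obtain j where j: "j < n div 2" "p = 2 * j + 1" by auto
        then have "p < n" using en by presburger
        then show "p \<in> Od" using j by (simp add: Od_def)
      qed
    qed
    moreover have "inj_on (\<lambda>j. 2 * j + 1) {..<n div 2}" by (rule inj_onI) simp
    ultimately show ?thesis by (simp add: card_image)
  qed
  have "card (CL' n) = (\<Sum>p\<in>Od. card (Cp p))"
    unfolding union by (rule card_UN_disjoint[OF fO _ disj]) (simp add: fC)
  also have "\<dots> = (\<Sum>p\<in>Od. E (n - 1))" using same last by simp
  also have "\<dots> = (n div 2) * E (n - 1)" using cO by simp
  finally show ?thesis using en by simp
qed

lemma A0_E:
  assumes "even n" "n \<ge> 2"
  shows "2 * A0 n = n * E (n - 1)"
  using A0_CL[OF assms(2)] CL_CL'[OF assms] card_CL'[OF assms] by simp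



lemma E_1: "E 1 = 1"
proof -
  have "Z {..<1} = {[0]}"
  proof
    show "Z {..<1} \<subseteq> {[0]}"
    proof
      fix xs assume xs: "xs \<in> Z {..<1}"
      then have d: "distinct xs" and s: "set xs = {0}" by (auto simp: Z_def)
      then have "length xs = 1" using distinct_card[OF d] by simp
      then obtain x where "xs = [x]" by (cases xs) auto
      then show "xs \<in> {[0]}" using s by simp
    qed
    show "{[0]} \<subseteq> Z {..<1}" by (auto simp: Z_def zz_def)
  qed
  then show ?thesis by (simp add: E_def)
qed

lemma dtan_E: "(even k \<longrightarrow> dtan k = 0) \<and> (odd k \<longrightarrow> dtan k = of_nat (E k))"
proof (induction k rule: less_induct)
  case (less k)
  show ?case
  proof (cases k)
    case 0
    then show ?thesis by (simp add: dtan_def)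
  next
    case (Suc m)
    have IH0: "dtan i = 0" if "i < k" "even i" for i using less.IH[OF that(1)] that(2) by simp
    have IH1: "dtan i = of_nat (E i)" if "i < k" "odd i" for i using less.IH[OF that(1)] that(2) by simp
    show ?thesis
    proof (cases "m = 0")
      case True
      have e1: "E (Suc 0) = 1" using E_1 by simp
      show ?thesis using Suc dtan_rec[of 0] True by (simp add: dtan_def e1)
    next
      case m0: False
      have rec: "dtan k = (\<Sum>i = 0..m. of_nat (m choose i) * dtan i * dtan (m - i))"
        using dtan_rec[of m] m0 Suc by simp
      show ?thesis
      proof (cases "even m")
        case False
        have "(\<Sum>i = 0..m. of_nat (m choose i) * dtan i * dtan (m - i)) = 0"
        proof (rule sum.neutral, rule ballI)
          fix i assume i: "i \<in> {0..m}"
          have "even i \<or> even (m - i)" using False i by auto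
          moreover have "i < k" "m - i < k" using i Suc by auto
          ultimately have "dtan i = 0 \<or> dtan (m - i) = 0" using IH0 by blast
          then show "of_nat (m choose i) * dtan i * dtan (m - i) = 0" by auto
        qed
        then show ?thesis using rec False Suc by simp
      next
        case True
        have m2: "m \<ge> 2" using True m0 by presburger
        have "(\<Sum>i = 0..m. of_nat (m choose i) * dtan i * dtan (m - i)) =
              (\<Sum>i = 0..m. of_nat (if odd i then (m choose i) * (E i * E (m-i)) else 0))"
        proof (rule sum.cong[OF refl])
          fix i assume i: "i \<in> {0..m}"
          show "of_nat (m choose i) * dtan i * dtan (m - i) =
                of_nat (if odd i then (m choose i) * (E i * E (m-i)) else 0)"
          proof (cases "odd i")
            case True2: True
            then have "odd (m - i)" using True i by auto
            then show ?thesis using True2 IH1[of i] IH1[of "m - i"] i Suc by auto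
          next
            case False
            then show ?thesis using IH0[of i] i Suc by auto
          qed
        qed
        also have "\<dots> = of_nat (E (Suc m))" by (simp only: of_nat_sum[symmetric] E_rec[OF True m2])
        finally show ?thesis using rec True Suc by simp
      qed
    qed
  qed
qed

lemma int_sum:
  fixes N :: nat and L :: real
  assumes eN: "even N" and s: "(\<lambda>j. 1 / (2 * real j + 1) ^ N) sums L"
  shows "(\<Sum>\<^sub>\<infinity>k::int. 1 / (real_of_int (4 * k + 1)) ^ N) = L"
proof -
  define g :: "nat \<Rightarrow> int" where "g j = (if even j then int (j div 2) else - int (j div 2) - 1)" for j
  define h :: "int \<Rightarrow> nat" where "h k = (if k \<ge> 0 then 2 * nat k else 2 * nat (- k - 1) + 1)" for k
  have bij: "bij_betw g UNIV UNIV"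
  proof (rule bij_betw_byWitness[where f' = h])
    show "\<forall>a\<in>UNIV. h (g a) = a" by (auto simp: g_def h_def)
    show "\<forall>a'\<in>UNIV. g (h a') = a'" by (auto simp: g_def h_def)
  qed auto
  have fg: "1 / (real_of_int (4 * g j + 1)) ^ N = 1 / (2 * real j + 1) ^ N" for j
  proof (cases "even j")
    case True
    then obtain a where "j = 2 * a" by (auto elim: evenE)
    then show ?thesis by (simp add: g_def)
  next
    case False
    then obtain a where a: "j = 2 * a + 1" by (auto elim: oddE)
    then have r: "real_of_int (4 * g j + 1) = - (2 * real j + 1)" by (simp add: g_def)
    have "(-(2*real j+1))^N = (2*real j+1)^N" by (rule power_minus_even[OF eN])
    then show ?thesis by (simp only: r)
  qed
  have "((\<lambda>j. 1 / (2 * real j + 1) ^ N) has_sum L) UNIV"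
    by (rule sums_nonneg_imp_has_sum[OF s]) simp
  then have "((\<lambda>j. 1 / (real_of_int (4 * g j + 1)) ^ N) has_sum L) UNIV" by (simp only: fg)
  then have "((\<lambda>k. 1 / (real_of_int (4 * k + 1)) ^ N) has_sum L) UNIV"
    using has_sum_reindex_bij_betw[OF bij, of "\<lambda>k. 1 / (real_of_int (4 * k + 1)) ^ N"] by simp
  then show ?thesis by (rule infsumI)
qed

theorem mainTheorem10:
  fixes n :: nat
  assumes "even n" and "n \<ge> 2"
  shows "real (A0 n) = (2 / pi) ^ n * fact n * (\<Sum>\<^sub>\<infinity>k::int. 1 / (real_of_int (4 * k + 1)) ^ n)"
proof -
  define m where "m = n - 1"
  have nm: "n = Suc m" using assms(2) by (simp add: m_def)
  have om: "odd m" using assms nm by simp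
  have m0: "m > 0" using assms(2) nm by simp
  define Pr where "Pr = Polygamma m (1/2 :: real)"
  have Pc: "Polygamma m (1/2 :: complex) = of_real Pr"
    using Polygamma_of_real[of "1/2 :: real" m] by (simp add: Pr_def)
  have "Polygamma m (1/2 :: complex) - (-1)^m * Polygamma m (1/2) = of_real pi ^ Suc m * dtan m"
    by (rule polygamma_dtan)
  then have "2 * (of_real Pr :: complex) = of_real pi ^ n * of_nat (E m)"
    using om dtan_E[of m] Pc nm by simp
  then have "complex_of_real (2 * Pr) = complex_of_real (pi ^ n * real (E m))" by simp
  then have P2: "2 * Pr = pi ^ n * real (E m)" by (simp only: of_real_eq_iff)
  have "(\<lambda>k. inverse ((1/2 + of_nat k) ^ Suc m)) sums ((-1) ^ Suc m * Polygamma m (1/2 :: real) / fact m)"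
    by (rule Polygamma_LIMSEQ) (use m0 in auto)
  then have s1: "(\<lambda>k. inverse ((1/2 + real k) ^ n)) sums (Pr / fact m)"
    using assms(1) nm by (simp add: Pr_def)
  have "inverse ((1/2 + real k) ^ n) = 2 ^ n * (1 / (2 * real k + 1) ^ n)" for k
  proof -
    have "1/2 + real k = (2 * real k + 1) / 2" by simp
    then show ?thesis by (simp add: power_divide field_simps)
  qed
  then have "(\<lambda>k. 2 ^ n * (1 / (2 * real k + 1) ^ n)) sums (Pr / fact m)" using s1 by simp
  then have "(\<lambda>k. 2 ^ n * (1 / (2 * real k + 1) ^ n) / 2 ^ n) sums (Pr / fact m / 2 ^ n)"
    by (rule sums_divide)
  then have "(\<lambda>k. 1 / (2 * real k + 1) ^ n) sums (Pr / fact m / 2 ^ n)" by simp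
  then have S: "(\<Sum>\<^sub>\<infinity>k::int. 1 / (real_of_int (4 * k + 1)) ^ n) = Pr / fact m / 2 ^ n"
    by (rule int_sum[OF assms(1)])
  have A: "2 * real (A0 n) = real n * real (E m)"
    using A0_E[OF assms] unfolding m_def by (metis of_nat_mult of_nat_numeral)
  have fn: "fact n = real n * fact m" using nm by simp
  have pi0: "pi ^ n \<noteq> 0" by simp
  have "2 * real (A0 n) * pi ^ n = real n * (real (E m) * pi ^ n)" using A by simp
  also have "\<dots> = real n * (2 * Pr)" using P2 by simp
  finally have "real (A0 n) * pi ^ n = real n * Pr" by simp
  then have "real (A0 n) = real n * Pr / pi ^ n"
    using pi0 by (simp add: field_simps)
  also have "\<dots> = (2 / pi) ^ n * fact n * (Pr / fact m / 2 ^ n)"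
    by (simp add: fn power_divide field_simps)
  finally show ?thesis using S by simp
qed

end
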